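(* Let $w(x)=\frac{2}{1+x^2}$, $0<s<\tfrac12$, $\tau_s=\left(\frac{\Gamma(1-2s)\sin(s\pi)}{\pi}\int_{\mathbb{R}}w^2\right)^{-1}$. For $h\in L^\infty(\mathbb{R})$ let $T(h)$ be the unique solution of $(-\Delta)^sV=\tau_sh$ on $\mathbb{R}$ with $V(x)\to0$ as $|x|\to\infty$, and let $v_w=T(w^2)$. For $\phi$ define \[ N(\phi)=\frac{(w+\phi)^2}{T((w+\phi)^2)}-\frac{w^2}{v_w}-2w\phi+2w^2\frac{\int_{\mathbb{R}}w\phi\,dx}{\int_{\mathbb{R}}w^2\,dx}. \] Let $\|\phi\|_*=\sup_{x}(1+|x|)^2|\phi(x)|$, $\mathcal{H}=\{\phi\in L^\infty(\mathbb{R}):\int_{\mathbb{R}}\phi\,\tfrac{dw}{dx}\,dx=0\}$ and, for a constant $C_0>0$ and small $\delta>0$, $\mathcal{D}=\{\phi\in\mathcal{H}:\|\phi\|_*\le C_0(1-2s)^{1-\delta}\}$. Then there is a constant $C$ such that for $1-2s$ sufficiently small and every $\phi\in\mathcal{D}$, \[ \|N(\phi)\|_*\le C\big(\|\phi\|_*+\sigma(1-2s)\big)\|\phi\|_*, \] where $\sigma(1-2s)\le C(1-2s)^{1-\delta}$ as $1-2s\to0$.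
   Context: $(-\Delta)^s$ is the fractional Laplacian on $\mathbb{R}$ (Fourier multiplier $|\xi|^{2s}$); $w$ is the unique positive even decaying solution of $(-\Delta)^{1/2}w+w-w^2=0$. *)

theory Defs
  imports "HOL-Analysis.Analysis" "HOL-Analysis.Gamma_Function"
begin

definition w :: "real \<Rightarrow> real" where
  "w x = 2 / (1 + x^2)"

text \<open>Normalising constant of the one-dimensional Riesz potential:
  the fundamental solution of (-Delta)^s on R, 0<s<1/2, is
  c_s |x|^(2s-1) with c_s = Gamma(1-2s) sin(s pi)/pi.\<close>
definition riesz_const :: "real \<Rightarrow> real" where
  "riesz_const s = Gamma (1 - 2 * s) * sin (s * pi) / pi"

definition tau :: "real \<Rightarrow> real" where
  "tau s = inverse (riesz_const s * (LINT x|lborel. (w x)^2))"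

text \<open>T(h): the solution of (-Delta)^s V = tau_s h decaying at infinity,
  given by the Riesz potential V = tau_s (c_s |.|^(2s-1) * h).\<close>
definition T :: "real \<Rightarrow> (real \<Rightarrow> real) \<Rightarrow> real \<Rightarrow> real" where
  "T s h x = tau s * riesz_const s * (LINT y|lborel. \<bar>x - y\<bar> powr (2 * s - 1) * h y)"

definition v_w :: "real \<Rightarrow> real \<Rightarrow> real" where
  "v_w s = T s (\<lambda>x. (w x)^2)"

definition N :: "real \<Rightarrow> (real \<Rightarrow> real) \<Rightarrow> real \<Rightarrow> real" where
  "N s \<phi> x =
     (w x + \<phi> x)^2 / T s (\<lambda>y. (w y + \<phi> y)^2) x
     - (w x)^2 / v_w s x
     - 2 * w x * \<phi> x
     + 2 * (w x)^2 * (LINT y|lborel. w y * \<phi> y) / (LINT y|lborel. (w y)^2)"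

definition star_norm :: "(real \<Rightarrow> real) \<Rightarrow> real" where
  "star_norm \<phi> = (SUP x. (1 + \<bar>x\<bar>)^2 * \<bar>\<phi> x\<bar>)"

definition H_space :: "(real \<Rightarrow> real) set" where
  "H_space = {\<phi>. \<phi> \<in> borel_measurable lborel \<and>
                  (\<exists>B. AE x in lborel. \<bar>\<phi> x\<bar> \<le> B) \<and>
                  (LINT x|lborel. \<phi> x * deriv w x) = 0}"

definition D_set :: "real \<Rightarrow> real \<Rightarrow> real \<Rightarrow> (real \<Rightarrow> real) set" where
  "D_set C0 \<delta> s = {\<phi> \<in> H_space.
       \<forall>x. (1 + \<bar>x\<bar>)^2 * \<bar>\<phi> x\<bar> \<le> C0 * (1 - 2 * s) powr (1 - \<delta>)}"

end

theory Submission
  imports Defs "HOL-Probability.Sinc_Integral"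
begin

lemma w_meas[measurable]: "w \<in> borel_measurable borel"
  unfolding w_def by measurable

definition prof :: "real \<Rightarrow> real" where "prof y = 1 / (1 + y^2)^2"

lemma prof_meas[measurable]: "prof \<in> borel_measurable borel"
  unfolding prof_def by measurable

lemma int_inv1sq: "integrable lborel (\<lambda>y::real. inverse (1 + y^2))"
proof -
  have "einterval (-\<infinity>) \<infinity> = (UNIV::real set)" by (auto simp: einterval_iff)
  then show ?thesis
    using integrable_inverse_1_plus_square unfolding set_integrable_def by simp
qed

lemma inv1sq_bounds: "0 < inverse (1 + y^2)" "inverse (1 + (y::real)^2) \<le> 1"
proof -
  have p: "0 < 1 + y^2" by (simp add: add_pos_nonneg)
  then show "0 < inverse (1 + y^2)" by simp
  have "1 \<le> 1 + y^2" by simp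
  from le_imp_inverse_le[OF this] show "inverse (1 + (y::real)^2) \<le> 1" by simp
qed

lemma prof_alt: "prof y = inverse (1 + y^2) * inverse (1 + y^2)"
  unfolding prof_def by (simp add: power2_eq_square divide_inverse)

lemma prof_pos: "0 < prof y" unfolding prof_alt using inv1sq_bounds[of y] by simp

lemma prof_le_inv: "prof y \<le> inverse (1 + y^2)"
proof -
  have "inverse (1 + y^2) * inverse (1 + y^2) \<le> inverse (1 + y^2) * 1"
    by (rule mult_left_mono) (use inv1sq_bounds[of y] in auto)
  then show ?thesis unfolding prof_alt by simp
qed

lemma prof_le1: "prof y \<le> 1" using prof_le_inv[of y] inv1sq_bounds[of y] by linarith

lemma prof_int: "integrable lborel prof"
proof (rule Bochner_Integration.integrable_bound[OF int_inv1sq])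
  show "prof \<in> borel_measurable lborel" by measurable
  show "AE x in lborel. norm (prof x) \<le> norm (inverse (1 + x^2))"
  proof (rule AE_I2)
    fix x :: real
    show "norm (prof x) \<le> norm (inverse (1 + x^2))"
      unfolding real_norm_def abs_of_pos[OF prof_pos] abs_of_pos[OF inv1sq_bounds(1)[of x]] by (rule prof_le_inv)
  qed
qed

lemma absy_le1: "\<bar>y\<bar> \<le> 1 + (y::real)^2"
proof -
  have e: "y^2 = \<bar>y\<bar> * \<bar>y\<bar>" by (simp add: power2_eq_square)
  have "0 \<le> (\<bar>y\<bar> - 1) * (\<bar>y\<bar> - 1)" by simp
  then have "0 \<le> \<bar>y\<bar> * \<bar>y\<bar> - 2 * \<bar>y\<bar> + 1" by (simp add: algebra_simps)
  then show ?thesis unfolding e by simp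
qed

lemma absy_le: "\<bar>y\<bar> * inverse (1 + y^2) \<le> (1::real)"
proof -
  have p: "0 < 1 + y^2" by (simp add: add_pos_nonneg)
  show ?thesis using absy_le1[of y] p by (simp add: divide_inverse[symmetric] pos_divide_le_eq)
qed

lemma prof_abs_int: "integrable lborel (\<lambda>y. \<bar>y\<bar> * prof y)"
proof (rule Bochner_Integration.integrable_bound[OF int_inv1sq])
  show "(\<lambda>y. \<bar>y\<bar> * prof y) \<in> borel_measurable lborel" by measurable
  show "AE y in lborel. norm (\<bar>y\<bar> * prof y) \<le> norm (inverse (1 + y^2))"
  proof (rule AE_I2)
  fix y :: real
  have "\<bar>y\<bar> * prof y = (\<bar>y\<bar> * inverse (1 + y^2)) * inverse (1 + y^2)" unfolding prof_alt by simp
  also have "\<dots> \<le> 1 * inverse (1 + y^2)"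
    by (rule mult_right_mono[OF absy_le]) (use inv1sq_bounds[of y] in simp)
  finally have le: "\<bar>y\<bar> * prof y \<le> inverse (1 + y^2)" by simp
  have nn: "0 \<le> \<bar>y\<bar> * prof y" using prof_pos[of y] by simp
  show "norm (\<bar>y\<bar> * prof y) \<le> norm (inverse (1 + y^2))"
    unfolding real_norm_def abs_of_nonneg[OF nn] abs_of_pos[OF inv1sq_bounds(1)[of y]] by (rule le)
  qed
qed

definition kern :: "real \<Rightarrow> real \<Rightarrow> real" where "kern t z = \<bar>z\<bar> powr (-t)"
definition S1 :: "real \<Rightarrow> real \<Rightarrow> real" where "S1 t z = indicator {0..1} z * z powr (-t)"
definition S :: "real \<Rightarrow> real \<Rightarrow> real" where "S t z = indicator {-1..1} z * \<bar>z\<bar> powr (-t)"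

lemma kern_meas[measurable]: "kern t \<in> borel_measurable borel" unfolding kern_def by measurable
lemma S1_meas[measurable]: "S1 t \<in> borel_measurable borel" unfolding S1_def by measurable
lemma S_meas[measurable]: "S t \<in> borel_measurable borel" unfolding S_def by measurable

lemma S_split: "S t z = S1 t z + S1 t (-z)"
  unfolding S_def S1_def by (auto simp: indicator_def)

lemma S1_int: assumes "0 < t" "t < 1"
  shows "integrable lborel (S1 t)" "integral\<^sup>L lborel (S1 t) = 1 / (1 - t)"
proof -
  have h: "((\<lambda>x. x powr (-t)) has_integral (1 / (1 - t))) {0..1}"
    using has_integral_powr_from_0[of "-t" 1] assms by simp
  have eq: "(\<lambda>x. if x \<in> {0..1} then x powr (-t) else 0) = S1 t"
    by (auto simp: S1_def indicator_def)
  have hU: "(S1 t has_integral (1 / (1 - t))) UNIV"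
    using h has_integral_restrict_UNIV[of "{0..1}" "\<lambda>x. x powr (-t)"] unfolding eq by simp
  have nn: "S1 t x \<ge> 0" for x by (simp add: S1_def)
  have nnI: "integral\<^sup>N lborel (S1 t) = 1 / (1 - t)"
    by (rule nn_integral_has_integral_lborel[OF _ nn hU]) measurable
  show i: "integrable lborel (S1 t)"
  proof (rule integrableI_nn_integral_finite[where x="1/(1-t)"])
    show "S1 t \<in> borel_measurable lborel" by measurable
    show "AE x in lborel. 0 \<le> S1 t x" by (simp add: nn)
    show "(\<integral>\<^sup>+ x. ennreal (S1 t x) \<partial>lborel) = ennreal (1 / (1 - t))" by (rule nnI)
  qed
  show "integral\<^sup>L lborel (S1 t) = 1 / (1 - t)"
    using has_integral_unique[OF has_integral_integral_lborel[OF i] hU] .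
qed

lemma transl: fixes f :: "real \<Rightarrow> real" assumes "integrable lborel f"
  shows "integrable lborel (\<lambda>y. f (x - y))" "integral\<^sup>L lborel (\<lambda>y. f (x - y)) = integral\<^sup>L lborel f"
proof -
  have e: "(\<lambda>y. f (x + -1 * y)) = (\<lambda>y. f (x - y))" by simp
  show "integrable lborel (\<lambda>y. f (x - y))"
    using lborel_integrable_real_affine[OF assms, of "-1" x] unfolding e by simp
  show "integral\<^sup>L lborel (\<lambda>y. f (x - y)) = integral\<^sup>L lborel f"
    using lborel_integral_real_affine[of "-1" f x] unfolding e by simp
qed

lemma S_int: assumes "0 < t" "t < 1"
  shows "integrable lborel (S t)" "integral\<^sup>L lborel (S t) = 2 / (1 - t)"
proof -
  have a: "integrable lborel (\<lambda>z. S1 t (0 - z))" "integral\<^sup>L lborel (\<lambda>z. S1 t (0 - z)) = 1/(1-t)"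
    using transl[OF S1_int(1)[OF assms], of 0] S1_int(2)[OF assms] by auto
  have e: "S t = (\<lambda>z. S1 t z + S1 t (0 - z))" using S_split by auto
  show "integrable lborel (S t)" unfolding e using a S1_int[OF assms] by simp
  show "integral\<^sup>L lborel (S t) = 2 / (1 - t)" unfolding e
    using a S1_int[OF assms] by (simp add: Bochner_Integration.integral_add)
qed

lemma ind_int: "integrable lborel (indicator {-1..1::real} :: real \<Rightarrow> real)"
   "integral\<^sup>L lborel (indicator {-1..1::real} :: real \<Rightarrow> real) = 2"
  by (auto intro!: integrable_real_indicator)

lemma S_nonneg: "0 \<le> S t z" unfolding S_def by simp

lemma kern_nonneg: "0 \<le> kern t z" unfolding kern_def by simp

lemma kern_le: assumes "0 \<le> t" shows "kern t z \<le> S t z + 1"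
proof (cases "\<bar>z\<bar> \<le> 1")
  case True
  then have "z \<in> {-1..1}" by auto
  then show ?thesis by (simp add: kern_def S_def)
next
  case False
  then have "\<bar>z\<bar> powr (-t) \<le> \<bar>z\<bar> powr 0" by (intro powr_mono) (use assms in auto)
  moreover have "z \<noteq> 0" using False by auto
  ultimately show ?thesis using False S_nonneg[of t z] by (simp add: kern_def)
qed

lemma kern_diff: assumes "0 \<le> t" "z \<noteq> 0"
  shows "\<bar>kern t z - 1\<bar> \<le> S t z - indicator {-1..1} z + t * \<bar>z\<bar>"
proof (cases "\<bar>z\<bar> \<le> 1")
  case True
  have "\<bar>z\<bar> powr 0 \<le> \<bar>z\<bar> powr (-t)" by (rule powr_mono') (use assms True in auto)
  then have "1 \<le> kern t z" using assms by (simp add: kern_def)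
  moreover have "z \<in> {-1..1}" using True by auto
  ultimately show ?thesis using True assms by (simp add: kern_def S_def)
next
  case False
  then have "\<bar>z\<bar> powr (-t) \<le> \<bar>z\<bar> powr 0" by (intro powr_mono) (use assms in auto)
  then have k1: "kern t z \<le> 1" using assms by (simp add: kern_def)
  have "kern t z = exp (- t * ln \<bar>z\<bar>)" using assms by (simp add: kern_def powr_def)
  also have "\<dots> \<ge> 1 + (- t * ln \<bar>z\<bar>)" by (rule exp_ge_add_one_self)
  finally have k2: "1 - t * ln \<bar>z\<bar> \<le> kern t z" by simp
  have "ln \<bar>z\<bar> \<le> \<bar>z\<bar> - 1" using ln_le_minus_one[of "\<bar>z\<bar>"] assms by simp
  then have "t * ln \<bar>z\<bar> \<le> t * \<bar>z\<bar>" using assms by (intro mult_left_mono) auto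
  moreover have "z \<notin> {-1..1}" using False by auto
  ultimately show ?thesis using k1 k2 False by (simp add: S_def)
qed

definition J0 :: real where "J0 = integral\<^sup>L lborel prof"
definition J1 :: real where "J1 = integral\<^sup>L lborel (\<lambda>y. \<bar>y\<bar> * prof y)"
definition KK :: real where "KK = 4 + J0 + J1"

lemma J0_nn: "0 \<le> J0" unfolding J0_def by (rule integral_nonneg_AE) (simp add: less_imp_le[OF prof_pos])
lemma J1_nn: "0 \<le> J1" unfolding J1_def by (rule integral_nonneg_AE) (simp add: less_imp_le[OF prof_pos])
lemma KK_pos: "0 < KK" unfolding KK_def using J0_nn J1_nn by simp

lemma S_ind_nonneg: assumes "0 \<le> t" "z \<noteq> 0" shows "0 \<le> S t z - indicator {-1..1} z"
proof (cases "\<bar>z\<bar> \<le> 1")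
  case True
  have "\<bar>z\<bar> powr 0 \<le> \<bar>z\<bar> powr (-t)" by (rule powr_mono') (use assms True in auto)
  moreover have "z \<in> {-1..1}" using True by auto
  ultimately show ?thesis using assms by (simp add: S_def)
next
  case False
  then have "z \<notin> {-1..1}" by auto
  then show ?thesis by (simp add: S_def)
qed

lemma key:
  fixes f :: "real \<Rightarrow> real"
  assumes fm[measurable]: "f \<in> borel_measurable lborel"
    and fb: "\<And>y. \<bar>f y\<bar> \<le> B * prof y" and t: "0 < t" "t \<le> 1/2"
  shows "integrable lborel f"
    and "integrable lborel (\<lambda>y. kern t (x - y) * f y)"
    and "\<bar>integral\<^sup>L lborel (\<lambda>y. kern t (x - y) * f y) - integral\<^sup>L lborel f\<bar> \<le> B * KK * t * (1 + \<bar>x\<bar>)"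
    and "\<bar>integral\<^sup>L lborel (\<lambda>y. kern t (x - y) * f y)\<bar> \<le> B * KK"
proof -
  have t1: "0 < t" "t < 1" using t by auto
  have B: "0 \<le> B" using fb[of 0] prof_pos[of 0] by (smt (verit) zero_le_mult_iff)
  show fi: "integrable lborel f"
  proof (rule Bochner_Integration.integrable_bound[of _ "\<lambda>y. B * prof y"])
    show "integrable lborel (\<lambda>y. B * prof y)" using prof_int by simp
    show "f \<in> borel_measurable lborel" by measurable
    show "AE y in lborel. norm (f y) \<le> norm (B * prof y)"
      using fb B prof_pos by (simp add: abs_mult less_imp_le)
  qed
  have Si: "integrable lborel (\<lambda>y. S t (x - y))" "integral\<^sup>L lborel (\<lambda>y. S t (x - y)) = 2 / (1 - t)"
    using transl[OF S_int(1)[OF t1]] S_int(2)[OF t1] by auto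
  have Ii: "integrable lborel (\<lambda>y. indicator {-1..1::real} (x - y) :: real)"
       "integral\<^sup>L lborel (\<lambda>y. indicator {-1..1::real} (x - y) :: real) = 2"
    using transl[OF ind_int(1)] ind_int(2) by auto
  define G1 where "G1 y = B * S t (x - y) + B * prof y" for y
  have G1i: "integrable lborel G1" unfolding G1_def using Si prof_int by simp
  have G1I: "integral\<^sup>L lborel G1 = B * (2 / (1 - t)) + B * J0"
    unfolding G1_def J0_def using Si prof_int by (simp add: Bochner_Integration.integral_add)
  have kf_le: "\<bar>kern t (x - y) * f y\<bar> \<le> G1 y" for y
  proof -
    have "\<bar>kern t (x - y) * f y\<bar> = kern t (x - y) * \<bar>f y\<bar>" using kern_nonneg by (simp add: abs_mult)
    also have "\<dots> \<le> (S t (x - y) + 1) * (B * prof y)"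
      by (rule mult_mono[OF kern_le fb]) (use t B kern_nonneg S_nonneg in auto)
    also have "\<dots> = S t (x - y) * B * prof y + B * prof y" by (simp add: algebra_simps)
    also have "\<dots> \<le> S t (x - y) * B * 1 + B * prof y"
      by (intro add_right_mono mult_left_mono prof_le1) (use B S_nonneg in simp)
    finally show ?thesis by (simp add: G1_def algebra_simps)
  qed
  show ki: "integrable lborel (\<lambda>y. kern t (x - y) * f y)"
  proof (rule Bochner_Integration.integrable_bound[OF G1i])
    show "(\<lambda>y. kern t (x - y) * f y) \<in> borel_measurable lborel" by measurable
    show "AE y in lborel. norm (kern t (x - y) * f y) \<le> norm (G1 y)"
      using kf_le by (auto intro!: AE_I2 order_trans[OF _ abs_ge_self])
  qed
  show "\<bar>integral\<^sup>L lborel (\<lambda>y. kern t (x - y) * f y)\<bar> \<le> B * KK"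
  proof -
    have "\<bar>integral\<^sup>L lborel (\<lambda>y. kern t (x - y) * f y)\<bar> \<le> integral\<^sup>L lborel (\<lambda>y. \<bar>kern t (x - y) * f y\<bar>)"
      using integral_norm_bound[of lborel "\<lambda>y. kern t (x - y) * f y"] by simp
    also have "\<dots> \<le> integral\<^sup>L lborel G1"
      by (rule integral_mono[OF _ G1i]) (use ki kf_le in auto)
    also have "\<dots> \<le> B * 4 + B * J0" unfolding G1I
    proof -
      have "2 / (1 - t) \<le> 4" using t by (simp add: divide_simps)
      from mult_left_mono[OF this B] show "B * (2 / (1 - t)) + B * J0 \<le> B * 4 + B * J0" by simp
    qed
    also have "\<dots> \<le> B * KK" using B J1_nn unfolding KK_def by (simp add: algebra_simps)
    finally show ?thesis .
  qed
  define G2 where "G2 y = B * (S t (x - y) - indicator {-1..1} (x - y)) + B * t * (\<bar>x\<bar> * prof y + \<bar>y\<bar> * prof y)" for y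
  have G2i: "integrable lborel G2" unfolding G2_def using Si Ii prof_int prof_abs_int by simp
  have G2I: "integral\<^sup>L lborel G2 = B * (2 / (1 - t) - 2) + B * t * (\<bar>x\<bar> * J0 + J1)"
    unfolding G2_def J0_def J1_def using Si Ii prof_int prof_abs_int
    by (simp add: Bochner_Integration.integral_add Bochner_Integration.integral_diff)
  have dle: "\<bar>(kern t (x - y) - 1) * f y\<bar> \<le> G2 y" if "y \<noteq> x" for y
  proof -
    have z: "x - y \<noteq> 0" using that by simp
    have a0: "0 \<le> S t (x - y) - indicator {-1..1} (x - y)" using S_ind_nonneg[OF _ z] t by simp
    have "\<bar>(kern t (x - y) - 1) * f y\<bar> = \<bar>kern t (x - y) - 1\<bar> * \<bar>f y\<bar>" by (simp add: abs_mult)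
    also have "\<dots> \<le> (S t (x - y) - indicator {-1..1} (x - y) + t * \<bar>x - y\<bar>) * (B * prof y)"
      by (rule mult_mono[OF kern_diff[OF _ z] fb]) (use t a0 in auto)
    also have "\<dots> = (S t (x - y) - indicator {-1..1} (x - y)) * B * prof y + B * t * (\<bar>x - y\<bar> * prof y)"
      by (simp add: algebra_simps)
    also have "\<dots> \<le> (S t (x - y) - indicator {-1..1} (x - y)) * B * 1 + B * t * ((\<bar>x\<bar> + \<bar>y\<bar>) * prof y)"
    proof (rule add_mono)
      show "(S t (x - y) - indicator {-1..1} (x - y)) * B * prof y \<le> (S t (x - y) - indicator {-1..1} (x - y)) * B * 1"
        by (rule mult_left_mono[OF prof_le1]) (use a0 B in simp)
      show "B * t * (\<bar>x - y\<bar> * prof y) \<le> B * t * ((\<bar>x\<bar> + \<bar>y\<bar>) * prof y)"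
        by (intro mult_left_mono mult_right_mono abs_triangle_ineq4) (use B t prof_pos[of y] in auto)
    qed
    finally show ?thesis by (simp add: G2_def algebra_simps)
  qed
  have di: "integrable lborel (\<lambda>y. (kern t (x - y) - 1) * f y)"
    using ki fi by (simp add: algebra_simps)
  have "integral\<^sup>L lborel (\<lambda>y. kern t (x - y) * f y) - integral\<^sup>L lborel f = integral\<^sup>L lborel (\<lambda>y. (kern t (x - y) - 1) * f y)"
    using ki fi by (simp add: algebra_simps Bochner_Integration.integral_diff)
  also have "\<bar>\<dots>\<bar> \<le> integral\<^sup>L lborel (\<lambda>y. \<bar>(kern t (x - y) - 1) * f y\<bar>)"
    using integral_norm_bound[of lborel "\<lambda>y. (kern t (x - y) - 1) * f y"] by simp
  also have "\<dots> \<le> integral\<^sup>L lborel G2"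
  proof (rule integral_mono_AE[OF _ G2i])
    show "integrable lborel (\<lambda>y. \<bar>(kern t (x - y) - 1) * f y\<bar>)" using di by simp
    show "AE y in lborel. \<bar>(kern t (x - y) - 1) * f y\<bar> \<le> G2 y"
      using AE_lborel_singleton[of x] by eventually_elim (use dle in auto)
  qed
  also have "\<dots> \<le> B * KK * t * (1 + \<bar>x\<bar>)" unfolding G2I
  proof -
    have "2 / (1 - t) - 2 = 2 * t / (1 - t)" using t by (simp add: field_simps)
    also have "\<dots> \<le> 4 * t" using t by (simp add: divide_simps)
    finally have a: "B * (2 / (1 - t) - 2) \<le> B * (4 * t)" using B by (simp add: mult_left_mono)
    have "4 + \<bar>x\<bar> * J0 + J1 \<le> KK * (1 + \<bar>x\<bar>)"
      unfolding KK_def using J0_nn J1_nn by (simp add: algebra_simps)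
    then have "B * t * (4 + \<bar>x\<bar> * J0 + J1) \<le> B * t * (KK * (1 + \<bar>x\<bar>))"
      by (rule mult_left_mono) (use B t in simp)
    then show "B * (2 / (1 - t) - 2) + B * t * (\<bar>x\<bar> * J0 + J1) \<le> B * KK * t * (1 + \<bar>x\<bar>)"
      using a by (simp add: algebra_simps)
  qed
  finally show "\<bar>integral\<^sup>L lborel (\<lambda>y. kern t (x - y) * f y) - integral\<^sup>L lborel f\<bar> \<le> B * KK * t * (1 + \<bar>x\<bar>)" .
qed

lemma tri3: fixes a b c :: real shows "\<bar>a + b - c\<bar> \<le> \<bar>a\<bar> + \<bar>b\<bar> + \<bar>c\<bar>"
  by (simp add: abs_if)

lemma alg:
  fixes \<rho> r t m A K J Th Tq Tg Q W \<Phi> :: real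
  assumes rho: "1 \<le> \<rho>" and r: "0 < r" "r \<le> \<rho>" "r * r \<le> \<rho>"
    and t: "0 \<le> t" and m: "0 \<le> m" "m \<le> 1" and A: "0 < A" and K: "0 < K" and J: "0 \<le> J"
    and Thl: "2 * A \<le> Th * r" and Tgl: "A \<le> 2 * Tg * r" and Tg: "Tg = Th + Tq"
    and Th1: "\<bar>Th - 1\<bar> \<le> 4 * A * K * t * \<rho>" and Thb: "\<bar>Th\<bar> \<le> 4 * A * K"
    and Tqb: "\<bar>Tq\<bar> \<le> 5 * m * A * K"
    and TqQ: "\<bar>Tq - Q\<bar> \<le> 5 * m * A * K * t * \<rho> + A * m * m * J"
    and W: "0 \<le> W" "W * \<rho>\<^sup>2 \<le> 4" and Phi: "\<bar>\<Phi>\<bar> * \<rho>\<^sup>2 \<le> m"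
  shows "\<rho>\<^sup>2 * \<bar>2 * W * \<Phi> * (1 / Tg - 1) + \<Phi>\<^sup>2 / Tg - W\<^sup>2 * (Tq / (Tg * Th) - Q)\<bar>
     \<le> (80 * K + 2 / A + 16 * (5 * K * (4 * K + 20 * A * K * K) + A * (5 * K + J))) * m * (m + t)"
proof -
  define D where "D = t * \<rho> + m"
  have D0: "0 \<le> D" unfolding D_def using t rho m by simp
  have Dr: "D / \<rho> \<le> t + m"
  proof -
    have "D / \<rho> = t + m / \<rho>" unfolding D_def using rho by (simp add: field_simps)
    also have "m / \<rho> \<le> m" using rho m by (simp add: divide_le_eq mult_le_cancel_left1 order_trans[of _ 1])
    then have "t + m / \<rho> \<le> t + m" by simp
    finally show ?thesis .
  qed
  have rho0: "0 < \<rho>" using rho by simp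
  have Thp: "0 < Th" using Thl A r by (smt (verit) mult_nonpos_nonneg)
  have Tgp: "0 < Tg" using Tgl A r by (smt (verit) mult_nonpos_nonneg)
  have iTg: "1 / Tg \<le> 2 * \<rho> / A"
  proof -
    have "1 / Tg \<le> 2 * r / A" using Tgl Tgp A by (simp add: divide_simps mult.commute mult.left_commute)
    also have "\<dots> \<le> 2 * \<rho> / A" using r A by (simp add: divide_right_mono)
    finally show ?thesis .
  qed
  have iTh: "1 / Th \<le> r / (2 * A)" using Thl Thp A by (simp add: divide_simps mult.commute)
  have iTgh: "1 / (Tg * Th) \<le> \<rho> / (A * A)"
  proof -
    have "1 / (Tg * Th) = (1 / Tg) * (1 / Th)" by simp
    also have "\<dots> \<le> (2 * r / A) * (r / (2 * A))"
      using Tgl Tgp A iTh Thp r by (intro mult_mono) (simp_all add: divide_simps mult.commute mult.left_commute)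
    also have "\<dots> = (r * r) / (A * A)" using A by (simp add: field_simps)
    also have "\<dots> \<le> \<rho> / (A * A)" using r A by (simp add: divide_right_mono)
    finally show ?thesis .
  qed
  have Wb: "W \<le> 4 / \<rho>\<^sup>2" using W rho0 by (simp add: le_divide_eq)
  have Phib: "\<bar>\<Phi>\<bar> \<le> m / \<rho>\<^sup>2" using Phi rho0 by (simp add: le_divide_eq)
  have Tg1: "\<bar>1 - Tg\<bar> \<le> 5 * A * K * D"
  proof -
    have "\<bar>1 - Tg\<bar> \<le> \<bar>Th - 1\<bar> + \<bar>Tq\<bar>" unfolding Tg by linarith
    also have "\<dots> \<le> 4 * A * K * t * \<rho> + 5 * m * A * K" using Th1 Tqb by linarith
    also have "\<dots> \<le> 5 * A * K * D" unfolding D_def using A K t rho by (simp add: algebra_simps)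
    finally show ?thesis .
  qed
  have AK: "0 \<le> A * K" using A K by simp
  have T1: "\<rho>\<^sup>2 * \<bar>2 * W * \<Phi> * (1 / Tg - 1)\<bar> \<le> 80 * K * m * (m + t)"
  proof -
    have "\<rho>\<^sup>2 * \<bar>2 * W * \<Phi> * (1 / Tg - 1)\<bar> = 2 * W * (\<bar>\<Phi>\<bar> * \<rho>\<^sup>2) * \<bar>1 - Tg\<bar> * (1 / Tg)"
      using Tgp W by (simp add: abs_mult divide_simps)
    also have "\<dots> \<le> 2 * (4 / \<rho>\<^sup>2) * m * (5 * A * K * D) * (2 * \<rho> / A)"
      by (intro mult_mono Wb Phi Tg1 iTg) (use W Tgp m D0 A K rho0 in \<open>auto intro!: divide_nonneg_pos mult_nonneg_nonneg\<close>)
    also have "\<dots> = 80 * K * m * (D / \<rho>)" using A rho0 by (simp add: field_simps power2_eq_square)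
    also have "\<dots> \<le> 80 * K * m * (m + t)"
      using Dr K m by (intro mult_left_mono) (auto simp: add.commute)
    finally show ?thesis .
  qed
  have T2: "\<rho>\<^sup>2 * \<bar>\<Phi>\<^sup>2 / Tg\<bar> \<le> (2 / A) * m * (m + t)"
  proof -
    have "\<rho>\<^sup>2 * \<bar>\<Phi>\<^sup>2 / Tg\<bar> = (\<bar>\<Phi>\<bar> * \<rho>\<^sup>2) * \<bar>\<Phi>\<bar> * (1 / Tg)"
      using Tgp by (simp add: abs_mult power2_eq_square)
    also have "\<dots> \<le> m * (m / \<rho>\<^sup>2) * (2 * \<rho> / A)"
      by (intro mult_mono Phi Phib iTg) (use Tgp m in auto)
    also have "\<dots> = (2 / A) * m * (m / \<rho>)" using A rho0 by (simp add: field_simps power2_eq_square)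
    also have "\<dots> \<le> (2 / A) * m * (m + t)"
    proof -
      have "m / \<rho> \<le> m" using rho m by (simp add: divide_le_eq mult_le_cancel_left1 order_trans[of _ 1])
      then have "m / \<rho> \<le> m + t" using t by simp
      then show ?thesis using A m by (intro mult_left_mono) auto
    qed
    finally show ?thesis .
  qed
  define c1 where "c1 = 5 * K * (4 * K + 20 * A * K * K)"
  define c2 where "c2 = A * (5 * K + J)"
  have c1: "0 \<le> c1" unfolding c1_def using A K by simp
  have c2: "0 \<le> c2" unfolding c2_def using A K J by simp
  have X: "\<bar>Tq / (Tg * Th) - Q\<bar> \<le> m * D * (c1 * \<rho> + c2)"
  proof -
    have eq: "Tq / (Tg * Th) - Q = Tq * (1 - Tg * Th) * (1 / (Tg * Th)) + (Tq - Q)"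
      using Tgp Thp by (simp add: field_simps)
    have a: "\<bar>1 - Tg * Th\<bar> \<le> (4 * A * K + 20 * A * A * K * K) * D"
    proof -
      have e: "1 - Tg * Th = (1 - Th) + Th * (1 - Tg)" unfolding Tg by (simp add: algebra_simps)
      have "\<bar>1 - Tg * Th\<bar> = \<bar>(1 - Th) + Th * (1 - Tg)\<bar>" by (simp only: e)
      also have "\<dots> \<le> \<bar>1 - Th\<bar> + \<bar>Th * (1 - Tg)\<bar>" by (rule abs_triangle_ineq)
      also have "\<dots> = \<bar>Th - 1\<bar> + \<bar>Th\<bar> * \<bar>1 - Tg\<bar>" by (simp add: abs_mult abs_minus_commute)
      also have "\<dots> \<le> 4 * A * K * t * \<rho> + (4 * A * K) * (5 * A * K * D)"
        by (intro add_mono mult_mono Th1 Thb Tg1) (use AK in auto)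
      also have "\<dots> \<le> (4 * A * K + 20 * A * A * K * K) * D"
        unfolding D_def using A K m by (simp add: algebra_simps)
      finally show ?thesis .
    qed
    have b: "\<bar>Tq - Q\<bar> \<le> c2 * m * D"
    proof -
      have 1: "A * m * m * J \<le> A * m * D * J" using A m J t rho unfolding D_def
        by (intro mult_right_mono mult_left_mono) auto
      have 2: "(5 * m * A * K) * (t * \<rho>) \<le> (5 * m * A * K) * D" unfolding D_def using m A K
        by (intro mult_left_mono) auto
      have e: "c2 * m * D = (5 * m * A * K) * D + A * m * D * J" unfolding c2_def by (simp add: algebra_simps)
      have e2: "5 * m * A * K * t * \<rho> = (5 * m * A * K) * (t * \<rho>)" by (simp add: algebra_simps)
      show ?thesis unfolding e using TqQ 1 2 e2 by linarith
    qed
    have "\<bar>Tq / (Tg * Th) - Q\<bar> \<le> \<bar>Tq * (1 - Tg * Th) * (1 / (Tg * Th))\<bar> + \<bar>Tq - Q\<bar>"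
      unfolding eq by (rule abs_triangle_ineq)
    also have "\<bar>Tq * (1 - Tg * Th) * (1 / (Tg * Th))\<bar> + \<bar>Tq - Q\<bar> = \<bar>Tq\<bar> * \<bar>1 - Tg * Th\<bar> * (1 / (Tg * Th)) + \<bar>Tq - Q\<bar>"
      using Tgp Thp by (simp add: abs_mult)
    also have "\<dots> \<le> (5 * m * A * K) * ((4 * A * K + 20 * A * A * K * K) * D) * (\<rho> / (A * A)) + c2 * m * D"
      by (intro add_mono mult_mono Tqb a iTgh b) (use Tgp Thp A K m D0 in \<open>auto intro!: mult_nonneg_nonneg add_nonneg_nonneg\<close>)
    also have "\<dots> = m * D * (c1 * \<rho> + c2)" unfolding c1_def using A by (simp add: field_simps)
    finally show ?thesis .
  qed
  have T3: "\<rho>\<^sup>2 * \<bar>W\<^sup>2 * (Tq / (Tg * Th) - Q)\<bar> \<le> 16 * (c1 + c2) * m * (m + t)"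
  proof -
    have "\<rho>\<^sup>2 * \<bar>W\<^sup>2 * (Tq / (Tg * Th) - Q)\<bar> = (W * \<rho>\<^sup>2) * W * \<bar>Tq / (Tg * Th) - Q\<bar>"
      using W by (simp add: abs_mult power2_eq_square)
    also have "\<dots> \<le> 4 * (4 / \<rho>\<^sup>2) * (m * D * (c1 * \<rho> + c2))"
      by (intro mult_mono W Wb X) (use W in auto)
    also have "\<dots> \<le> 16 * (c1 + c2) * m * (D / \<rho>)"
    proof -
      have "c1 * \<rho> + c2 \<le> (c1 + c2) * \<rho>" using mult_left_mono[OF rho c2] by (simp add: algebra_simps)
      then have mm: "m * D * (c1 * \<rho> + c2) \<le> m * D * ((c1 + c2) * \<rho>)"
        using m D0 by (intro mult_left_mono) auto
      have "4 * (4 / \<rho>\<^sup>2) * (m * D * (c1 * \<rho> + c2)) \<le> 4 * (4 / \<rho>\<^sup>2) * (m * D * ((c1 + c2) * \<rho>))"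
        by (rule mult_left_mono[OF mm]) (use rho0 in simp)
      also have "\<dots> = 16 * (c1 + c2) * m * (D / \<rho>)" using rho0 by (simp add: field_simps power2_eq_square)
      finally show ?thesis .
    qed
    also have "\<dots> \<le> 16 * (c1 + c2) * m * (m + t)"
      using Dr c1 c2 m by (intro mult_left_mono) (auto simp: add.commute)
    finally show ?thesis .
  qed
  have "\<rho>\<^sup>2 * \<bar>2 * W * \<Phi> * (1 / Tg - 1) + \<Phi>\<^sup>2 / Tg - W\<^sup>2 * (Tq / (Tg * Th) - Q)\<bar>
      \<le> \<rho>\<^sup>2 * \<bar>2 * W * \<Phi> * (1 / Tg - 1)\<bar> + \<rho>\<^sup>2 * \<bar>\<Phi>\<^sup>2 / Tg\<bar> + \<rho>\<^sup>2 * \<bar>W\<^sup>2 * (Tq / (Tg * Th) - Q)\<bar>"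
  proof -
    have "\<bar>2 * W * \<Phi> * (1 / Tg - 1) + \<Phi>\<^sup>2 / Tg - W\<^sup>2 * (Tq / (Tg * Th) - Q)\<bar>
      \<le> \<bar>2 * W * \<Phi> * (1 / Tg - 1)\<bar> + \<bar>\<Phi>\<^sup>2 / Tg\<bar> + \<bar>W\<^sup>2 * (Tq / (Tg * Th) - Q)\<bar>" by (rule tri3)
    from mult_left_mono[OF this, of "\<rho>\<^sup>2"] show ?thesis by (simp add: algebra_simps)
  qed
  also have "\<dots> \<le> 80 * K * m * (m + t) + (2 / A) * m * (m + t) + 16 * (c1 + c2) * m * (m + t)"
    using T1 T2 T3 by linarith
  also have "\<dots> = (80 * K + 2 / A + 16 * (c1 + c2)) * m * (m + t)" by (simp add: algebra_simps)
  finally show ?thesis unfolding c1_def c2_def .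
qed

lemma key_low:
  fixes f :: "real \<Rightarrow> real"
  assumes fm[measurable]: "f \<in> borel_measurable lborel"
    and f0: "\<And>y. 0 \<le> f y" and fa: "\<And>y. y \<in> {-1..1} \<Longrightarrow> a \<le> f y" and a: "0 \<le> a"
    and ki: "integrable lborel (\<lambda>y. kern t (x - y) * f y)" and t: "0 \<le> t"
  shows "2 * a * (1 + \<bar>x\<bar>) powr (-t) \<le> integral\<^sup>L lborel (\<lambda>y. kern t (x - y) * f y)"
proof -
  define c where "c = (1 + \<bar>x\<bar>) powr (-t)"
  have c0: "0 \<le> c" unfolding c_def by simp
  have Li: "integrable lborel (\<lambda>y. indicator {-1..1::real} y * (a * c) :: real)"
    using ind_int(1) by simp
  have LI: "integral\<^sup>L lborel (\<lambda>y. indicator {-1..1::real} y * (a * c) :: real) = 2 * (a * c)"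
    using ind_int(2) by simp
  have le: "indicator {-1..1::real} y * (a * c) \<le> kern t (x - y) * f y" if "y \<noteq> x" for y
  proof (cases "y \<in> {-1..1}")
    case True
    have "\<bar>x - y\<bar> \<le> 1 + \<bar>x\<bar>" using True by auto
    then have "c \<le> kern t (x - y)" unfolding c_def kern_def
      by (intro powr_mono2') (use t that in auto)
    then have "a * c \<le> f y * kern t (x - y)"
      by (intro mult_mono fa True) (use f0 c0 in auto)
    then show ?thesis using True by (simp add: mult.commute)
  next
    case False
    then show ?thesis using kern_nonneg f0 by simp
  qed
  have "2 * (a * c) \<le> integral\<^sup>L lborel (\<lambda>y. kern t (x - y) * f y)"
    unfolding LI[symmetric]
  proof (rule integral_mono_AE[OF Li ki])
    show "AE y in lborel. indicator {-1..1::real} y * (a * c) \<le> kern t (x - y) * f y"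
      using AE_lborel_singleton[of x] by eventually_elim (use le in auto)
  qed
  then show ?thesis unfolding c_def by simp
qed

definition Iw :: real where "Iw = integral\<^sup>L lborel (\<lambda>y. (w y)^2)"
definition Aw :: real where "Aw = 1 / Iw"
definition Kmain :: real where
  "Kmain = 80 * KK + 2 / Aw + 16 * (5 * KK * (4 * KK + 20 * Aw * KK * KK) + Aw * (5 * KK + J0))"

lemma w_alt: "w y = 2 * inverse (1 + y^2)" unfolding w_def by (simp add: divide_inverse)

lemma wsq: "(w y)^2 = 4 * prof y" unfolding w_alt prof_alt by (simp add: power2_eq_square)

lemma Iw_ge: "2 \<le> Iw"
proof -
  have i: "integrable lborel (\<lambda>y. (w y)^2)" unfolding wsq using prof_int by simp
  have "(w y)^2 \<ge> indicator {-1..1} y" for y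
  proof (cases "y \<in> {-1..1}")
    case True
    then have "\<bar>y\<bar> \<le> 1" by auto
    then have "y^2 \<le> 1" using power2_le_iff_abs_le[of 1 y] by simp
    then have "1 \<le> w y" unfolding w_def by (simp add: add_pos_nonneg)
    then have "1 \<le> (w y)^2" by (simp add: one_le_power)
    then show ?thesis using True by simp
  next
    case False then show ?thesis by simp
  qed
  then have "integral\<^sup>L lborel (indicator {-1..1::real} :: real \<Rightarrow> real) \<le> Iw"
    unfolding Iw_def by (intro integral_mono ind_int(1) i) auto
  then show ?thesis using ind_int(2) by simp
qed

lemma Aw_pos: "0 < Aw" unfolding Aw_def using Iw_ge by simp

lemma Kmain_nn: "0 \<le> Kmain" unfolding Kmain_def using KK_pos Aw_pos J0_nn by simp

lemma rho_sq: "1 + y^2 \<le> (1 + \<bar>y\<bar>)^2" for y :: real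
  by (simp add: power2_eq_square algebra_simps)

lemma rho_sq2: "(1 + \<bar>y\<bar>)^2 \<le> 2 * (1 + y^2)" for y :: real
proof -
  have "0 \<le> (\<bar>y\<bar> - 1)^2" by simp
  then show ?thesis by (simp add: power2_eq_square algebra_simps)
qed

lemma phi_bound:
  fixes y \<phi> m :: real
  assumes "(1 + \<bar>y\<bar>)^2 * \<bar>\<phi>\<bar> \<le> m"
  shows "\<bar>\<phi>\<bar> \<le> m * inverse (1 + y^2)"
proof -
  have p: "0 < 1 + y^2" by (simp add: add_pos_nonneg)
  have "(1 + y^2) * \<bar>\<phi>\<bar> \<le> (1 + \<bar>y\<bar>)^2 * \<bar>\<phi>\<bar>" by (rule mult_right_mono[OF rho_sq]) simp
  then have "(1 + y^2) * \<bar>\<phi>\<bar> \<le> m" using assms by linarith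
  then show ?thesis using p by (simp add: divide_inverse[symmetric] le_divide_eq mult.commute)
qed

lemma tauc: assumes "0 < s" "s < 1/2" shows "tau s * riesz_const s = Aw"
proof -
  have "0 < Gamma (1 - 2 * s)" using assms by simp
  moreover have "0 < sin (s * pi)" using assms by (intro sin_gt_zero) auto
  ultimately have c: "0 < riesz_const s" unfolding riesz_const_def by simp
  show ?thesis unfolding tau_def Aw_def Iw_def[symmetric] using c Iw_ge by (simp add: field_simps)
qed

lemma T_eq: assumes "0 < s" "s < 1/2"
  shows "T s f x = Aw * integral\<^sup>L lborel (\<lambda>y. kern (1 - 2 * s) (x - y) * f y)"
proof -
  have "2 * s - 1 = - (1 - 2 * s)" by simp
  then show ?thesis unfolding T_def kern_def using tauc[OF assms] by simp
qed

lemma main_est: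
  fixes \<phi> :: "real \<Rightarrow> real" and s m x :: real
  assumes s: "1/4 \<le> s" "s < 1/2"
    and pm[measurable]: "\<phi> \<in> borel_measurable lborel"
    and pb: "\<And>y. (1 + \<bar>y\<bar>)^2 * \<bar>\<phi> y\<bar> \<le> m" and m: "0 \<le> m" "m \<le> 1"
  shows "(1 + \<bar>x\<bar>)^2 * \<bar>N s \<phi> x\<bar> \<le> Kmain * m * (m + (1 - 2 * s))"
proof -
  define t where "t = 1 - 2 * s"
  have t: "0 < t" "t \<le> 1/2" using s unfolding t_def by auto
  have s0: "0 < s" using s by simp
  define u where "u y = inverse (1 + y^2)" for y :: real
  have u0: "0 < u y" "u y \<le> 1" for y unfolding u_def using inv1sq_bounds by auto
  have wu: "w y = 2 * u y" for y unfolding u_def w_alt ..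
  have pu: "prof y = u y * u y" for y unfolding u_def prof_alt ..
  have phu: "\<bar>\<phi> y\<bar> \<le> m * u y" for y unfolding u_def by (rule phi_bound[OF pb])
  define h where "h y = (w y)^2" for y
  define q where "q y = 2 * w y * \<phi> y + (\<phi> y)^2" for y
  define g where "g y = (w y + \<phi> y)^2" for y
  define ps where "ps y = (\<phi> y)^2" for y
  define wp where "wp y = w y * \<phi> y" for y
  have hm[measurable]: "h \<in> borel_measurable lborel" unfolding h_def[abs_def] by measurable
  have qm[measurable]: "q \<in> borel_measurable lborel" unfolding q_def[abs_def] by measurable
  have gm[measurable]: "g \<in> borel_measurable lborel" unfolding g_def[abs_def] by measurable
  have psm[measurable]: "ps \<in> borel_measurable lborel" unfolding ps_def[abs_def] by measurable
  have wpm[measurable]: "wp \<in> borel_measurable lborel" unfolding wp_def[abs_def] by measurable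
  have ghq: "g y = h y + q y" for y unfolding g_def h_def q_def by (simp add: power2_eq_square algebra_simps)
  have hb: "\<bar>h y\<bar> \<le> 4 * prof y" for y unfolding h_def wsq by (simp add: less_imp_le[OF prof_pos])
  have wpb: "\<bar>wp y\<bar> \<le> (2 * m) * prof y" for y
  proof -
    have "\<bar>wp y\<bar> = (2 * u y) * \<bar>\<phi> y\<bar>" unfolding wp_def wu using u0[of y] by (simp add: abs_mult)
    also have "\<dots> \<le> (2 * u y) * (m * u y)" by (rule mult_left_mono[OF phu]) (use u0[of y] in simp)
    finally show ?thesis unfolding pu by (simp add: algebra_simps)
  qed
  have psb: "\<bar>ps y\<bar> \<le> (m * m) * prof y" for y
  proof -
    have "\<bar>ps y\<bar> = \<bar>\<phi> y\<bar> * \<bar>\<phi> y\<bar>" unfolding ps_def by (simp add: power2_eq_square abs_mult)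
    also have "\<dots> \<le> (m * u y) * (m * u y)" by (intro mult_mono phu) (use m u0[of y] in auto)
    finally show ?thesis unfolding pu by (simp add: algebra_simps)
  qed
  have qb: "\<bar>q y\<bar> \<le> (5 * m) * prof y" for y
  proof -
    have e: "q y = 2 * wp y + ps y" unfolding q_def wp_def ps_def by simp
    have "\<bar>q y\<bar> \<le> \<bar>2 * wp y\<bar> + \<bar>ps y\<bar>" unfolding e by (rule abs_triangle_ineq)
    then have "\<bar>q y\<bar> \<le> 2 * \<bar>wp y\<bar> + \<bar>ps y\<bar>" by (simp add: abs_mult)
    also have "\<dots> \<le> 2 * ((2 * m) * prof y) + (m * m) * prof y" using wpb[of y] psb[of y] by linarith
    also have "\<dots> \<le> (5 * m) * prof y"
    proof -
      have "m * m \<le> m * 1" using m by (intro mult_left_mono) auto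
      then have "(m * m) * prof y \<le> m * prof y" by (intro mult_right_mono) (use prof_pos[of y] in auto)
      then show ?thesis by (simp add: algebra_simps)
    qed
    finally show ?thesis .
  qed
  have gb: "\<bar>g y\<bar> \<le> 9 * prof y" for y
  proof -
    have "\<bar>g y\<bar> \<le> \<bar>h y\<bar> + \<bar>q y\<bar>" unfolding ghq by (rule abs_triangle_ineq)
    also have "\<dots> \<le> 4 * prof y + (5 * m) * prof y" using hb[of y] qb[of y] by linarith
    also have "\<dots> = (4 + 5 * m) * prof y" by (simp add: algebra_simps)
    also have "\<dots> \<le> 9 * prof y" by (rule mult_right_mono) (use m prof_pos[of y] in auto)
    finally show ?thesis .
  qed
  note kh = key(1)[OF hm hb t] key(2-4)[OF hm hb t, where x=x]
  note kq = key(1)[OF qm qb t] key(2-4)[OF qm qb t, where x=x]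
  note kg = key(1)[OF gm gb t] key(2-4)[OF gm gb t, where x=x]
  note kps = key(1)[OF psm psb t] key(2-4)[OF psm psb t, where x=x]
  note kwp = key(1)[OF wpm wpb t] key(2-4)[OF wpm wpb t, where x=x]
  define Ih where "Ih = integral\<^sup>L lborel (\<lambda>y. kern t (x - y) * h y)"
  define Iq where "Iq = integral\<^sup>L lborel (\<lambda>y. kern t (x - y) * q y)"
  define Ig where "Ig = integral\<^sup>L lborel (\<lambda>y. kern t (x - y) * g y)"
  define P where "P = integral\<^sup>L lborel wp"
  define psi where "psi = integral\<^sup>L lborel ps"
  have Igs: "Ig = Ih + Iq"
  proof -
    have "(\<lambda>y. kern t (x - y) * g y) = (\<lambda>y. kern t (x - y) * h y + kern t (x - y) * q y)"
      unfolding ghq by (simp add: algebra_simps)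
    then show ?thesis unfolding Ig_def Ih_def Iq_def using kh(2) kq(2)
      by (simp add: Bochner_Integration.integral_add)
  qed
  have hI: "integral\<^sup>L lborel h = Iw" unfolding Iw_def h_def ..
  have qI: "integral\<^sup>L lborel q = 2 * P + psi"
  proof -
    have "q = (\<lambda>y. 2 * wp y + ps y)" unfolding q_def wp_def ps_def by (auto simp: algebra_simps)
    then show ?thesis unfolding P_def psi_def using kwp(1) kps(1)
      by (simp add: Bochner_Integration.integral_add)
  qed
  have psib: "\<bar>psi\<bar> \<le> m * m * J0"
  proof -
    have "\<bar>psi\<bar> \<le> integral\<^sup>L lborel (\<lambda>y. \<bar>ps y\<bar>)" unfolding psi_def
      using integral_norm_bound[of lborel ps] by simp
    also have "\<dots> \<le> integral\<^sup>L lborel (\<lambda>y. (m * m) * prof y)"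
      by (rule integral_mono) (use kps(1) prof_int psb in auto)
    also have "\<dots> = m * m * J0" unfolding J0_def by simp
    finally show ?thesis .
  qed
  define \<rho> where "\<rho> = 1 + \<bar>x\<bar>"
  have rho: "1 \<le> \<rho>" unfolding \<rho>_def by simp
  define r where "r = \<rho> powr t"
  have r0: "0 < r" unfolding r_def using rho by simp
  have rr: "\<rho> powr (-t) = 1 / r" unfolding r_def by (simp add: powr_minus divide_inverse)
  have r1: "r \<le> \<rho>"
  proof -
    have "\<rho> powr t \<le> \<rho> powr 1" by (rule powr_mono) (use t rho in auto)
    then show ?thesis unfolding r_def using rho by simp
  qed
  have r2: "r * r \<le> \<rho>"
  proof -
    have "r * r = \<rho> powr (t + t)" unfolding r_def by (rule powr_add[symmetric])
    also have "\<dots> \<le> \<rho> powr 1" by (rule powr_mono) (use t rho in auto)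
    finally show ?thesis using rho by simp
  qed
  have h0: "0 \<le> h y" for y unfolding h_def by simp
  have g0: "0 \<le> g y" for y unfolding g_def by simp
  have ub: "1/2 \<le> u y" if "y \<in> {-1..1}" for y
  proof -
    have "\<bar>y\<bar> \<le> 1" using that by auto
    then have "y^2 \<le> 1" using power2_le_iff_abs_le[of 1 y] by simp
    then show ?thesis unfolding u_def by (simp add: add_pos_nonneg divide_simps)
  qed
  have h1: "1 \<le> h y" if "y \<in> {-1..1}" for y
  proof -
    have "1 \<le> w y" unfolding wu using ub[OF that] by simp
    then show ?thesis unfolding h_def by (simp add: one_le_power)
  qed
  have g1: "1/4 \<le> g y" if "y \<in> {-1..1}" for y
  proof -
    have "m * u y \<le> u y" using m u0[of y] by (simp add: mult_le_cancel_right1)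
    then have "u y \<le> w y + \<phi> y" unfolding wu using phu[of y] by linarith
    then have "1/2 \<le> w y + \<phi> y" using ub[OF that] by simp
    then have "(1/2)^2 \<le> (w y + \<phi> y)^2" by (rule power_mono) simp
    then show ?thesis unfolding g_def by (simp add: power2_eq_square)
  qed
  have Ihl: "2 * 1 * \<rho> powr (-t) \<le> Ih" unfolding Ih_def \<rho>_def
    by (rule key_low[OF _ h0 h1 _ kh(2)]) (use t in auto)
  have Igl: "2 * (1/4) * \<rho> powr (-t) \<le> Ig" unfolding Ig_def \<rho>_def
    by (rule key_low[OF _ g0 g1 _ kg(2)]) (use t in auto)
  define Th where "Th = Aw * Ih"
  define Tq where "Tq = Aw * Iq"
  define Tg where "Tg = Aw * Ig"
  have AwIw: "Aw * Iw = 1" unfolding Aw_def using Iw_ge by simp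
  have Thl: "2 * Aw \<le> Th * r"
  proof -
    have "2 \<le> Ih * r" using Ihl r0 unfolding rr by (simp add: divide_simps)
    from mult_left_mono[OF this less_imp_le[OF Aw_pos]] show ?thesis unfolding Th_def by (simp add: algebra_simps)
  qed
  have Tgl: "Aw \<le> 2 * Tg * r"
  proof -
    have "1 \<le> 2 * Ig * r" using Igl r0 unfolding rr by (simp add: divide_simps)
    from mult_left_mono[OF this less_imp_le[OF Aw_pos]] show ?thesis unfolding Tg_def by (simp add: algebra_simps)
  qed
  have Tgs: "Tg = Th + Tq" unfolding Tg_def Th_def Tq_def Igs by (simp add: algebra_simps)
  have Th1: "\<bar>Th - 1\<bar> \<le> 4 * Aw * KK * t * \<rho>"
  proof -
    have "Th - 1 = Aw * (Ih - Iw)" unfolding Th_def using AwIw by (simp add: algebra_simps)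
    then have "\<bar>Th - 1\<bar> = Aw * \<bar>Ih - Iw\<bar>" using Aw_pos by (simp add: abs_mult)
    also have "\<dots> \<le> Aw * (4 * KK * t * \<rho>)"
      using kh(3) unfolding Ih_def hI \<rho>_def by (intro mult_left_mono) (use Aw_pos in auto)
    finally show ?thesis by (simp add: algebra_simps)
  qed
  have Thb: "\<bar>Th\<bar> \<le> 4 * Aw * KK"
  proof -
    have "\<bar>Th\<bar> = Aw * \<bar>Ih\<bar>" unfolding Th_def using Aw_pos by (simp add: abs_mult)
    also have "\<dots> \<le> Aw * (4 * KK)" using kh(4) unfolding Ih_def by (intro mult_left_mono) (use Aw_pos in auto)
    finally show ?thesis by (simp add: algebra_simps)
  qed
  have Tqb: "\<bar>Tq\<bar> \<le> 5 * m * Aw * KK"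
  proof -
    have "\<bar>Tq\<bar> = Aw * \<bar>Iq\<bar>" unfolding Tq_def using Aw_pos by (simp add: abs_mult)
    also have "\<dots> \<le> Aw * (5 * m * KK)" using kq(4) unfolding Iq_def by (intro mult_left_mono) (use Aw_pos in auto)
    finally show ?thesis by (simp add: algebra_simps)
  qed
  define Q where "Q = 2 * Aw * P"
  have TqQ: "\<bar>Tq - Q\<bar> \<le> 5 * m * Aw * KK * t * \<rho> + Aw * m * m * J0"
  proof -
    have "Tq - Q = Aw * ((Iq - integral\<^sup>L lborel q) + psi)" unfolding Tq_def Q_def qI by (simp add: algebra_simps)
    then have "\<bar>Tq - Q\<bar> = Aw * \<bar>(Iq - integral\<^sup>L lborel q) + psi\<bar>" using Aw_pos by (simp add: abs_mult)
    also have "\<dots> \<le> Aw * (5 * m * KK * t * \<rho> + m * m * J0)"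
    proof (rule mult_left_mono)
      have "\<bar>Iq - integral\<^sup>L lborel q\<bar> \<le> 5 * m * KK * t * \<rho>" using kq(3) unfolding Iq_def \<rho>_def by simp
      then show "\<bar>(Iq - integral\<^sup>L lborel q) + psi\<bar> \<le> 5 * m * KK * t * \<rho> + m * m * J0"
        using psib by linarith
    qed (use Aw_pos in simp)
    finally show ?thesis by (simp add: algebra_simps)
  qed
  define W where "W = w x"
  define \<Phi> where "\<Phi> = \<phi> x"
  have W0: "0 \<le> W" unfolding W_def wu using u0[of x] by simp
  have Wr: "W * \<rho>\<^sup>2 \<le> 4"
  proof -
    have "W * \<rho>\<^sup>2 \<le> W * (2 * (1 + x^2))" unfolding \<rho>_def by (rule mult_left_mono[OF rho_sq2 W0])
    also have "\<dots> = 4"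
    proof -
      have p: "1 + x^2 \<noteq> 0" by (smt (verit) zero_le_power2)
      show ?thesis unfolding W_def w_def using p by (simp add: field_simps)
    qed
    finally show ?thesis .
  qed
  have Phr: "\<bar>\<Phi>\<bar> * \<rho>\<^sup>2 \<le> m" unfolding \<Phi>_def \<rho>_def using pb[of x] by (simp add: mult.commute)
  have alg_res: "\<rho>\<^sup>2 * \<bar>2 * W * \<Phi> * (1 / Tg - 1) + \<Phi>\<^sup>2 / Tg - W\<^sup>2 * (Tq / (Tg * Th) - Q)\<bar>
     \<le> Kmain * m * (m + t)"
    unfolding Kmain_def
    by (rule alg[OF rho r0 r1 r2 _ m Aw_pos KK_pos J0_nn Thl Tgl Tgs Th1 Thb Tqb TqQ W0 Wr Phr]) (use t in simp)
  have Thp: "0 < Th" using Thl Aw_pos r0 by (smt (verit) mult_nonpos_nonneg)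
  have Tgp: "0 < Tg" using Tgl Aw_pos r0 by (smt (verit) mult_nonpos_nonneg)
  have TgT: "T s g x = Tg" unfolding T_eq[OF s0 s(2)] Tg_def Ig_def t_def ..
  have ThT: "v_w s x = Th" unfolding v_w_def T_eq[OF s0 s(2)] Th_def Ih_def t_def h_def ..
  have Neq: "N s \<phi> x = 2 * W * \<Phi> * (1 / Tg - 1) + \<Phi>\<^sup>2 / Tg - W\<^sup>2 * (Tq / (Tg * Th) - Q)"
  proof -
    have "N s \<phi> x = (W + \<Phi>)^2 / Tg - W^2 / Th - 2 * W * \<Phi> + 2 * W^2 * P / Iw"
      unfolding N_def TgT[unfolded g_def] ThT P_def wp_def Iw_def[symmetric] W_def \<Phi>_def ..
    also have "\<dots> = 2 * W * \<Phi> * (1 / Tg - 1) + \<Phi>\<^sup>2 / Tg - W\<^sup>2 * (Tq / (Tg * Th) - Q)"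
    proof -
      have a: "(W + \<Phi>)^2 / Tg = W^2 / Tg + 2 * W * \<Phi> / Tg + \<Phi>^2 / Tg"
        by (simp add: power2_sum add_divide_distrib algebra_simps)
      have b: "W^2 / Th = W^2 / Tg + W^2 * (Tq / (Tg * Th))"
      proof -
        have f0: "Th / (Tg * Th) = 1 / Tg" using Thp by simp
        have f1: "1 / Tg + Tq / (Tg * Th) = (Th + Tq) / (Tg * Th)" unfolding add_divide_distrib f0 ..
        have f2: "(Th + Tq) / (Tg * Th) = 1 / Th" unfolding Tgs[symmetric] using Tgp by simp
        have "W^2 / Tg + W^2 * (Tq / (Tg * Th)) = W^2 * (1 / Tg + Tq / (Tg * Th))" by (simp add: algebra_simps)
        also have "\<dots> = W^2 / Th" unfolding f1 f2 by simp
        finally show ?thesis by simp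
      qed
      have c: "2 * W^2 * P / Iw = W^2 * Q" unfolding Q_def Aw_def by simp
      have d: "2 * W * \<Phi> * (1 / Tg - 1) = 2 * W * \<Phi> / Tg - 2 * W * \<Phi>" by (simp add: algebra_simps)
      have e: "W\<^sup>2 * (Tq / (Tg * Th) - Q) = W^2 * (Tq / (Tg * Th)) - W^2 * Q" by (simp add: algebra_simps)
      show ?thesis unfolding d e using a b c by linarith
    qed
    finally show ?thesis .
  qed
  show ?thesis using alg_res unfolding Neq \<rho>_def t_def .
qed

theorem lemma6p6:
  shows "\<exists>\<delta>0>0. \<forall>\<delta>. 0 < \<delta> \<and> \<delta> < \<delta>0 \<longrightarrow> (\<forall>C0>0.
     \<exists>C>0. \<exists>\<sigma>::real \<Rightarrow> real. \<exists>\<epsilon>>0.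
       (\<forall>t. 0 < t \<and> t < \<epsilon> \<longrightarrow> \<sigma> t \<le> C * t powr (1 - \<delta>)) \<and>
       (\<forall>s. 0 < s \<and> s < 1/2 \<and> 1 - 2 * s < \<epsilon> \<longrightarrow>
          (\<forall>\<phi> \<in> D_set C0 \<delta> s. \<forall>x.
             (1 + \<bar>x\<bar>)^2 * \<bar>N s \<phi> x\<bar>
               \<le> C * (star_norm \<phi> + \<sigma> (1 - 2 * s)) * star_norm \<phi>)))"
proof (rule exI[of _ 1], rule conjI, simp, intro allI impI)
  fix \<delta> C0 :: real
  assume d: "0 < \<delta> \<and> \<delta> < 1" and C0: "0 < C0"
  define C where "C = Kmain + 1"
  define \<epsilon> where "\<epsilon> = min (1/2) ((1 / C0) powr (1 / (1 - \<delta>)))"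
  have C1: "1 \<le> C" unfolding C_def using Kmain_nn by simp
  have e0: "0 < \<epsilon>" unfolding \<epsilon>_def using C0 by simp
  have e1: "\<epsilon> \<le> 1/2" unfolding \<epsilon>_def by simp
  have ed: "\<epsilon> powr (1 - \<delta>) \<le> 1 / C0"
  proof -
    have "\<epsilon> powr (1 - \<delta>) \<le> ((1 / C0) powr (1 / (1 - \<delta>))) powr (1 - \<delta>)"
      unfolding \<epsilon>_def by (rule powr_mono2) (use d e0 \<epsilon>_def in auto)
    also have "\<dots> = 1 / C0" using d C0 by (simp add: powr_powr)
    finally show ?thesis .
  qed
  show "\<exists>C>0. \<exists>\<sigma>::real \<Rightarrow> real. \<exists>\<epsilon>>0.
       (\<forall>t. 0 < t \<and> t < \<epsilon> \<longrightarrow> \<sigma> t \<le> C * t powr (1 - \<delta>)) \<and>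
       (\<forall>s. 0 < s \<and> s < 1/2 \<and> 1 - 2 * s < \<epsilon> \<longrightarrow>
          (\<forall>\<phi> \<in> D_set C0 \<delta> s. \<forall>x.
             (1 + \<bar>x\<bar>)^2 * \<bar>N s \<phi> x\<bar>
               \<le> C * (star_norm \<phi> + \<sigma> (1 - 2 * s)) * star_norm \<phi>))"
  proof -
  have P1: "t \<le> C * t powr (1 - \<delta>)" if t: "0 < t \<and> t < \<epsilon>" for t
  proof -
    have "t powr 1 \<le> t powr (1 - \<delta>)" by (rule powr_mono') (use t d e1 in auto)
    then have "t \<le> t powr (1 - \<delta>)" using t by simp
    also have "\<dots> \<le> C * t powr (1 - \<delta>)" using C1 by (simp add: mult_le_cancel_right1)
    finally show "t \<le> C * t powr (1 - \<delta>)" .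
  qed
  have P2: "(1 + \<bar>x\<bar>)^2 * \<bar>N s \<phi> x\<bar> \<le> C * (star_norm \<phi> + (1 - 2 * s)) * star_norm \<phi>"
    if s: "0 < s \<and> s < 1/2 \<and> 1 - 2 * s < \<epsilon>" and p: "\<phi> \<in> D_set C0 \<delta> s" for s \<phi> x
  proof -
    define b where "b = C0 * (1 - 2 * s) powr (1 - \<delta>)"
    have pm: "\<phi> \<in> borel_measurable lborel" using p unfolding D_set_def H_space_def by auto
    have pb: "(1 + \<bar>y\<bar>)^2 * \<bar>\<phi> y\<bar> \<le> b" for y using p unfolding D_set_def b_def by auto
    have bdd: "bdd_above (range (\<lambda>y. (1 + \<bar>y\<bar>)^2 * \<bar>\<phi> y\<bar>))" by (rule bdd_aboveI[where M=b]) (use pb in auto)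
    define m where "m = star_norm \<phi>"
    have pm2: "(1 + \<bar>y\<bar>)^2 * \<bar>\<phi> y\<bar> \<le> m" for y unfolding m_def star_norm_def
      by (rule cSUP_upper[OF _ bdd]) simp
    have m0: "0 \<le> m" using pm2[of 0] by (smt (verit) mult_nonneg_nonneg zero_le_power2 abs_ge_zero)
    have mb: "m \<le> b" unfolding m_def star_norm_def by (rule cSUP_least) (use pb in auto)
    have b1: "b \<le> 1"
    proof -
      have "(1 - 2 * s) powr (1 - \<delta>) \<le> \<epsilon> powr (1 - \<delta>)" by (rule powr_mono2) (use s d in auto)
      also have "\<dots> \<le> 1 / C0" by (rule ed)
      finally have le: "(1 - 2 * s) powr (1 - \<delta>) \<le> 1 / C0" .
      have "C0 * (1 - 2 * s) powr (1 - \<delta>) \<le> C0 * (1 / C0)" by (rule mult_left_mono[OF le]) (use C0 in simp)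
      then show ?thesis unfolding b_def using C0 by simp
    qed
    have s4: "1/4 \<le> s" using s e1 by simp
    have "(1 + \<bar>x\<bar>)^2 * \<bar>N s \<phi> x\<bar> \<le> Kmain * m * (m + (1 - 2 * s))"
      by (rule main_est[OF s4 _ pm pm2 m0]) (use s mb b1 in auto)
    also have "\<dots> \<le> C * (m + (1 - 2 * s)) * m"
    proof -
      have "0 \<le> m * (m + (1 - 2 * s))" using m0 s by simp
      then have "Kmain * (m * (m + (1 - 2 * s))) \<le> C * (m * (m + (1 - 2 * s)))"
        unfolding C_def by (intro mult_right_mono) auto
      then show ?thesis by (simp add: algebra_simps)
    qed
    finally show "(1 + \<bar>x\<bar>)^2 * \<bar>N s \<phi> x\<bar> \<le> C * (star_norm \<phi> + (1 - 2 * s)) * star_norm \<phi>"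
      unfolding m_def .
  qed
  show ?thesis
    apply (rule exI[where x=C])
    apply (rule conjI)
    using C1 apply simp
    apply (rule exI[where x="\<lambda>t. t"])
    apply (rule exI[where x=\<epsilon>])
    using e0 P1 P2 by simp
  qed
qed

end
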